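(* Let $k$ be a positive integer. For any graph $H=(W,F)$ there exists a graph $G$ containing $W$ as a subset of its vertex set such that the induced subgraph $G[W]$ is isomorphic to $H$ and $W$ is a minimum $k$-PVC of $G$.
   Context: All graphs are finite and simple. For a graph $G$ and a positive integer $k$, a $k$-path vertex cover ($k$-PVC) of $G$ is a set $S$ of vertices such that every path on $k$ vertices in $G$ contains at least one vertex of $S$. $\psi_k(G)$ denotes the minimum cardinality of a $k$-PVC of $G$, and a minimum $k$-PVC is a $k$-PVC of cardinality $\psi_k(G)$. *)

theory Defs
  imports Main
begin

type_synonym 'a graph = "'a set \<times> 'a set set"

definition verts :: "'a graph \<Rightarrow> 'a set" where "verts G = fst G"
definition edges :: "'a graph \<Rightarrow> 'a set set" where "edges G = snd G"

definition simple_graph :: "'a graph \<Rightarrow> bool" where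
  "simple_graph G \<longleftrightarrow> finite (verts G) \<and>
     (\<forall>e\<in>edges G. e \<subseteq> verts G \<and> card e = 2)"

definition adj :: "'a graph \<Rightarrow> 'a \<Rightarrow> 'a \<Rightarrow> bool" where
  "adj G u v \<longleftrightarrow> {u, v} \<in> edges G"

definition is_path :: "'a graph \<Rightarrow> 'a list \<Rightarrow> bool" where
  "is_path G p \<longleftrightarrow> p \<noteq> [] \<and> distinct p \<and> set p \<subseteq> verts G \<and>
     (\<forall>i. Suc i < length p \<longrightarrow> adj G (p ! i) (p ! Suc i))"

definition is_kpvc :: "'a graph \<Rightarrow> nat \<Rightarrow> 'a set \<Rightarrow> bool" where
  "is_kpvc G k S \<longleftrightarrow> S \<subseteq> verts G \<and>
     (\<forall>p. is_path G p \<and> length p = k \<longrightarrow> set p \<inter> S \<noteq> {})"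

definition psi :: "'a graph \<Rightarrow> nat \<Rightarrow> nat" where
  "psi G k = Min (card ` {S. is_kpvc G k S})"

definition is_min_kpvc :: "'a graph \<Rightarrow> nat \<Rightarrow> 'a set \<Rightarrow> bool" where
  "is_min_kpvc G k S \<longleftrightarrow> is_kpvc G k S \<and> card S = psi G k"

definition induced_subgraph :: "'a graph \<Rightarrow> 'a set \<Rightarrow> 'a graph" where
  "induced_subgraph G W = (W, {e\<in>edges G. e \<subseteq> W})"

definition graph_iso :: "'a graph \<Rightarrow> 'b graph \<Rightarrow> bool" where
  "graph_iso G H \<longleftrightarrow> (\<exists>f. bij_betw f (verts G) (verts H) \<and>
     (\<forall>u\<in>verts G. \<forall>v\<in>verts G. adj G u v \<longleftrightarrow> adj H (f u) (f v)))"

end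

theory Submission
  imports Defs "HOL-Library.Nat_Bijection"
begin

theorem mainTheorem4:
  fixes H :: "'a graph" and k :: nat
  assumes "k \<ge> 1"
    and "infinite (UNIV :: 'a set)"
    and "simple_graph H"
  shows "\<exists>G :: 'a graph. simple_graph G \<and> verts H \<subseteq> verts G \<and>
           graph_iso (induced_subgraph G (verts H)) H \<and>
           is_min_kpvc G k (verts H)"
proof -
  define W where "W = verts H"
  have finW: "finite W" using assms(3) by (simp add: simple_graph_def W_def)
  have Hedges: "e \<subseteq> W \<and> card e = 2" if "e \<in> edges H" for e
    using assms(3) that by (auto simp: simple_graph_def W_def)
  have "infinite (UNIV - W)" using assms(2) finW by (simp add: Diff_infinite_finite)
  then obtain f :: "nat \<Rightarrow> 'a" where finj: "inj f" and frng: "range f \<subseteq> UNIV - W"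
    using infinite_countable_subset by blast
  obtain g :: "'a \<Rightarrow> nat" where ginj: "inj_on g W"
    using finite_imp_inj_to_nat_seg[OF finW] by blast
  define x where "x w i = f (prod_encode (g w, i))" for w i
  have xinj: "w = w' \<and> i = j" if "w \<in> W" "w' \<in> W" "x w i = x w' j" for w w' i j
  proof -
    have "prod_encode (g w, i) = prod_encode (g w', j)" using that(3) finj
      by (simp add: x_def inj_eq)
    hence "g w = g w' \<and> i = j" by (simp add: prod_encode_eq)
    thus ?thesis using ginj that(1,2) by (auto dest: inj_onD)
  qed
  have xnW: "x w i \<notin> W" for w i using frng by (auto simp: x_def)
  define X where "X w = x w ` {..<k-1}" for w
  define D where "D w = insert w (X w)" for w
  have XnW: "X w \<inter> W = {}" for w using xnW by (auto simp: X_def)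
  have Ddisj: "w = w'" if "w \<in> W" "w' \<in> W" "v \<in> D w" "v \<in> D w'" for w w' v
  proof -
    have "v \<in> X w \<and> v \<in> X w' \<or> v = w \<and> v = w'"
      using that XnW unfolding D_def by blast
    thus ?thesis using that(1,2) xinj unfolding X_def by blast
  qed
  define GE where "GE = edges H \<union> (\<Union>w\<in>W. {{a,b} | a b. a \<in> D w \<and> b \<in> D w \<and> a \<noteq> b})"
  define GV where "GV = W \<union> (\<Union>w\<in>W. X w)"
  define G :: "'a graph" where "G = (GV, GE)"
  have vG: "verts G = GV" and eG: "edges G = GE" by (simp_all add: G_def verts_def edges_def)
  have DsubV: "D w \<subseteq> GV" if "w\<in>W" for w using that by (auto simp: D_def GV_def)
  have sg: "simple_graph G"
    unfolding simple_graph_def vG eG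
  proof
    show "finite GV" using finW by (simp add: GV_def X_def)
    show "\<forall>e\<in>GE. e \<subseteq> GV \<and> card e = 2"
    proof
      fix e assume "e \<in> GE"
      then consider "e \<in> edges H" | w a b where "w \<in> W" "a \<in> D w" "b \<in> D w" "a \<noteq> b" "e = {a,b}"
        unfolding GE_def by blast
      then show "e \<subseteq> GV \<and> card e = 2"
      proof cases
        case 1 then show ?thesis using Hedges[OF 1] by (auto simp: GV_def)
        next
        case 2 then show ?thesis using DsubV[OF 2(1)] by auto
      qed
    qed
  qed
  have indE: "{e\<in>GE. e \<subseteq> W} = edges H"
  proof
    show "edges H \<subseteq> {e\<in>GE. e \<subseteq> W}" using Hedges by (auto simp: GE_def)
    show "{e\<in>GE. e \<subseteq> W} \<subseteq> edges H"
    proof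
      fix e assume e: "e \<in> {e\<in>GE. e \<subseteq> W}"
      show "e \<in> edges H"
      proof (rule ccontr)
        assume "e \<notin> edges H"
        then obtain w a b where "w \<in> W" "a \<in> D w" "b \<in> D w" "a \<noteq> b" "e = {a,b}"
          using e unfolding GE_def by blast
        then show False using e XnW unfolding D_def by blast
      qed
    qed
  qed
  have iso: "graph_iso (induced_subgraph G W) H"
    unfolding graph_iso_def induced_subgraph_def
  proof (intro exI[of _ id] conjI)
    show "bij_betw id (verts (W, {e \<in> edges G. e \<subseteq> W})) (verts H)"
      by (simp add: verts_def W_def)
    show "\<forall>u\<in>verts (W, {e \<in> edges G. e \<subseteq> W}). \<forall>v\<in>verts (W, {e \<in> edges G. e \<subseteq> W}).
        adj (W, {e \<in> edges G. e \<subseteq> W}) u v = adj H (id u) (id v)"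
      using indE by (simp add: adj_def eG edges_def[of "(W,_)"])
  qed
  define P where "P w = w # map (x w) [0..<k-1]" for w
  have Ppath: "is_path G (P w) \<and> length (P w) = k \<and> set (P w) = D w" if "w \<in> W" for w
  proof (intro conjI)
    show "length (P w) = k" using assms(1) by (simp add: P_def)
    show sP: "set (P w) = D w" by (auto simp: P_def D_def X_def)
    have dist: "distinct (P w)"
    proof -
      have "inj_on (x w) {0..<k-1}" using xinj that by (auto intro: inj_onI)
      then show ?thesis using xnW[of w] that by (auto simp: P_def distinct_map) (metis xnW)
    qed
    show "is_path G (P w)"
      unfolding is_path_def
    proof (intro conjI allI impI)
      show "P w \<noteq> []" by (simp add: P_def)
      show "distinct (P w)" by fact
      show "set (P w) \<subseteq> verts G" using sP DsubV that vG by auto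
      fix i assume i: "Suc i < length (P w)"
      have "P w ! i \<in> D w" "P w ! Suc i \<in> D w" using i sP
        by (metis Suc_lessD nth_mem)+
      moreover have "P w ! i \<noteq> P w ! Suc i" using dist i by (simp add: nth_eq_iff_index_eq)
      ultimately show "adj G (P w ! i) (P w ! Suc i)"
        unfolding adj_def eG GE_def using that by blast
    qed
  qed
  have kpvc: "is_kpvc G k W"
    unfolding is_kpvc_def
  proof (intro conjI allI impI)
    show "W \<subseteq> verts G" by (auto simp: vG GV_def)
    fix p assume p: "is_path G p \<and> length p = k"
    show "set p \<inter> W \<noteq> {}"
    proof
      assume pW: "set p \<inter> W = {}"
      have ne: "p \<noteq> []" using p by (simp add: is_path_def)
      have "p ! 0 \<in> GV" using p ne by (auto simp: is_path_def vG)
      moreover have "p ! 0 \<notin> W" using pW ne by (simp add: disjoint_iff)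
      ultimately obtain w0 where w0: "w0 \<in> W" "p ! 0 \<in> X w0" by (auto simp: GV_def)
      have all: "\<forall>i. i < length p \<longrightarrow> p ! i \<in> X w0"
      proof
        fix i show "i < length p \<longrightarrow> p ! i \<in> X w0"
        proof (induction i)
          case 0 then show ?case using w0 by simp
        next
          case (Suc i)
          show ?case
          proof
            assume si: "Suc i < length p"
            hence pi: "p ! i \<in> X w0" using Suc by simp
            have "{p ! i, p ! Suc i} \<in> GE" using p si by (simp add: is_path_def adj_def eG)
            moreover have nW1: "p ! i \<notin> W" and nW2: "p ! Suc i \<notin> W"
              using pW si by (auto simp: disjoint_iff)
            ultimately obtain w a b where wab: "w \<in> W" "a \<in> D w" "b \<in> D w" "{p ! i, p ! Suc i} = {a,b}"
              using Hedges unfolding GE_def by blast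
            hence "p ! i \<in> D w" "p ! Suc i \<in> D w" by (auto simp: doubleton_eq_iff)
            moreover have "p ! i \<in> D w0" using pi by (simp add: D_def)
            ultimately have "w = w0" using Ddisj wab(1) w0(1) by blast
            then show "p ! Suc i \<in> X w0" using \<open>p ! Suc i \<in> D w\<close> nW2 w0 by (auto simp: D_def)
          qed
        qed
      qed
      hence "set p \<subseteq> X w0" by (auto simp: in_set_conv_nth)
      hence "card (set p) \<le> card (X w0)" by (simp add: X_def card_mono)
      also have "\<dots> \<le> k - 1" unfolding X_def using card_image_le[of "{..<k-1}" "x w0"] by simp
      finally have "length p \<le> k - 1" using p by (simp add: is_path_def distinct_card)
      thus False using p assms(1) by simp
    qed
  qed
  have lower: "card W \<le> card S" if S: "is_kpvc G k S" for S
  proof -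
    have "\<forall>w\<in>W. \<exists>v. v \<in> S \<and> v \<in> D w"
    proof
      fix w assume "w \<in> W"
      then show "\<exists>v. v \<in> S \<and> v \<in> D w" using S Ppath[of w] unfolding is_kpvc_def by blast
    qed
    then obtain h where h: "\<forall>w\<in>W. h w \<in> S \<and> h w \<in> D w" by metis
    have "inj_on h W" using h Ddisj by (metis inj_onI)
    moreover have "finite S" using S sg by (auto simp: is_kpvc_def simple_graph_def intro: finite_subset)
    ultimately show ?thesis using h by (intro card_inj_on_le) auto
  qed
  have "psi G k = card W"
    unfolding psi_def
  proof (rule Min_eqI)
    have "{S. is_kpvc G k S} \<subseteq> Pow (verts G)" by (auto simp: is_kpvc_def)
    moreover have "finite (verts G)" using sg by (simp add: simple_graph_def)
    ultimately show "finite (card ` {S. is_kpvc G k S})" by (meson finite_Pow_iff finite_imageI finite_subset)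
    show "\<And>y. y \<in> card ` {S. is_kpvc G k S} \<Longrightarrow> card W \<le> y" using lower by auto
    show "card W \<in> card ` {S. is_kpvc G k S}" using kpvc by auto
  qed
  hence "is_min_kpvc G k W" using kpvc by (simp add: is_min_kpvc_def)
  moreover have "W \<subseteq> verts G" by (auto simp: vG GV_def)
  ultimately show ?thesis using sg iso unfolding W_def by blast
qed

end
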